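(* Let $\Theta=\{1,2\}$, let $(A,u)$ be a decision problem with $|A|=2$, and let $P_1,\dots,P_m$ be experiments with Blackwell supremum $\overline P$. Then $$V(P_1,\dots,P_m;(A,u))=V(\overline P;(A,u))=\max_{j=1,\dots,m}V(P_j;(A,u)).$$
   Context: $\Theta$ is a finite set of states. A decision problem is a pair $(A,u)$ with $A$ a finite nonempty action set and $u:\Theta\times A\to\mathbb{R}$; for $\alpha\in\Delta(A)$ write $u(\theta,\alpha)=\sum_a\alpha(a)u(\theta,a)$. An experiment is a map $P:\Theta\to\Delta(Y)$ with $Y$ a finite signal set. Given experiments $P_j:\Theta\to\Delta(Y_j)$, $j=1,\dots,m$, let $\mathbf Y=Y_1\times\cdots\times Y_m$ and let $\mathcal P(P_1,\dots,P_m)$ be the set of experiments $P:\Theta\to\Delta(\mathbf Y)$ whose $j$-th marginal is $P_j(\cdot|\theta)$ for every $\theta$ and $j$. A strategy is a map $\sigma:\mathbf Y\to\Delta(A)$. Define $V(P_1,\dots,P_m;(A,u))=\max_{\sigma}\min_{P\in\mathcal P(P_1,\dots,P_m)}\sum_{\theta}\sum_{\mathbf y\in\mathbf Y}P(\mathbf y|\theta)u(\theta,\sigma(\mathbf y))$; for $m=1$ this is the usual value $V(P;(A,u))=\max_{\sigma:Y\to\Delta(A)}\sum_\theta\sum_y P(y|\theta)u(\theta,\sigma(y))$. An experiment $P$ is more informative than $Q$ if $V(P;(A,u))\ge V(Q;(A,u))$ for every decision problem. $R$ is a Blackwell supremum of $P_1,\dots,P_m$ if $R$ is more informative than each $P_j$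 and every $S$ more informative than all $P_j$ is more informative than $R$ (such a supremum exists when $|\Theta|=2$). *)

theory Defs
  imports Complex_Main "HOL-Library.FuncSet"
begin

definition distr :: "'x set \<Rightarrow> ('x \<Rightarrow> real) \<Rightarrow> bool" where
  "distr S p \<longleftrightarrow> (\<forall>x\<in>S. 0 \<le> p x) \<and> (\<Sum>x\<in>S. p x) = 1"

definition is_experiment :: "'th set \<Rightarrow> 'y set \<Rightarrow> ('th \<Rightarrow> 'y \<Rightarrow> real) \<Rightarrow> bool" where
  "is_experiment Th Y P \<longleftrightarrow> finite Y \<and> Y \<noteq> {} \<and> (\<forall>th\<in>Th. distr Y (P th))"

definition eu :: "'a set \<Rightarrow> ('th \<Rightarrow> 'a \<Rightarrow> real) \<Rightarrow> 'th \<Rightarrow> ('a \<Rightarrow> real) \<Rightarrow> real" where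
  "eu A u th \<alpha> = (\<Sum>a\<in>A. \<alpha> a * u th a)"

definition V1 :: "'th set \<Rightarrow> 'y set \<Rightarrow> ('th \<Rightarrow> 'y \<Rightarrow> real) \<Rightarrow> 'a set \<Rightarrow> ('th \<Rightarrow> 'a \<Rightarrow> real) \<Rightarrow> real" where
  "V1 Th Y P A u =
     (SUP \<sigma> \<in> {\<sigma>. \<forall>y\<in>Y. distr A (\<sigma> y)}. \<Sum>th\<in>Th. \<Sum>y\<in>Y. P th y * eu A u th (\<sigma> y))"

definition joint_signals :: "nat \<Rightarrow> (nat \<Rightarrow> 'y set) \<Rightarrow> (nat \<Rightarrow> 'y) set" where
  "joint_signals m Ys = PiE {1..m} Ys"

definition couplings :: "'th set \<Rightarrow> nat \<Rightarrow> (nat \<Rightarrow> 'y set) \<Rightarrow> (nat \<Rightarrow> 'th \<Rightarrow> 'y \<Rightarrow> real)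
    \<Rightarrow> ('th \<Rightarrow> (nat \<Rightarrow> 'y) \<Rightarrow> real) set" where
  "couplings Th m Ys Ps =
     {P. \<forall>th\<in>Th. distr (joint_signals m Ys) (P th) \<and>
          (\<forall>j\<in>{1..m}. \<forall>y\<in>Ys j.
             (\<Sum>ys\<in>{ys\<in>joint_signals m Ys. ys j = y}. P th ys) = Ps j th y)}"

definition Vm :: "'th set \<Rightarrow> nat \<Rightarrow> (nat \<Rightarrow> 'y set) \<Rightarrow> (nat \<Rightarrow> 'th \<Rightarrow> 'y \<Rightarrow> real)
    \<Rightarrow> 'a set \<Rightarrow> ('th \<Rightarrow> 'a \<Rightarrow> real) \<Rightarrow> real" where
  "Vm Th m Ys Ps A u =
     (SUP \<sigma> \<in> {\<sigma>. \<forall>ys\<in>joint_signals m Ys. distr A (\<sigma> ys)}.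
        INF P \<in> couplings Th m Ys Ps.
          \<Sum>th\<in>Th. \<Sum>ys\<in>joint_signals m Ys. P th ys * eu A u th (\<sigma> ys))"

(* Action sets range over finite nonempty sets of naturals (every finite action set
  is, up to relabelling, of this form). *)
definition more_informative :: "'th set \<Rightarrow> nat set \<Rightarrow> ('th \<Rightarrow> nat \<Rightarrow> real)
    \<Rightarrow> nat set \<Rightarrow> ('th \<Rightarrow> nat \<Rightarrow> real) \<Rightarrow> bool" where
  "more_informative Th Y P Z Q \<longleftrightarrow>
     (\<forall>(A::nat set) (u::'th \<Rightarrow> nat \<Rightarrow> real). finite A \<and> A \<noteq> {} \<longrightarrow>
        V1 Th Z Q A u \<le> V1 Th Y P A u)"

(* R (signals RY) is a Blackwell supremum of P_1,...,P_m. Signal sets range over finite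
  nonempty sets of naturals (every finite signal set is, up to relabelling, of this form). *)
definition blackwell_sup :: "'th set \<Rightarrow> nat \<Rightarrow> (nat \<Rightarrow> nat set) \<Rightarrow> (nat \<Rightarrow> 'th \<Rightarrow> nat \<Rightarrow> real)
    \<Rightarrow> nat set \<Rightarrow> ('th \<Rightarrow> nat \<Rightarrow> real) \<Rightarrow> bool" where
  "blackwell_sup Th m Ys Ps RY R \<longleftrightarrow>
     is_experiment Th RY R \<and>
     (\<forall>j\<in>{1..m}. more_informative Th RY R (Ys j) (Ps j)) \<and>
     (\<forall>SY S. is_experiment Th SY S \<and> (\<forall>j\<in>{1..m}. more_informative Th SY S (Ys j) (Ps j))
        \<longrightarrow> more_informative Th SY S RY R)"

end

theory Submission
  imports Defs
begin



lemma PiE_group: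
  fixes \<phi> :: "(nat \<Rightarrow> 'y) \<Rightarrow> real"
  assumes "finite I" "\<forall>k\<in>I. finite (Ys k)" "j \<in> I"
  shows "(\<Sum>ys\<in>PiE I Ys. \<phi> ys) = (\<Sum>y\<in>Ys j. \<Sum>ys\<in>{ys\<in>PiE I Ys. ys j = y}. \<phi> ys)"
proof -
  have "finite (PiE I Ys)" using assms by (intro finite_PiE) auto
  moreover have "(\<lambda>ys. ys j) ` PiE I Ys \<subseteq> Ys j" using assms(3) by (auto simp: PiE_def Pi_def)
  ultimately show ?thesis using sum.group[of "PiE I Ys" "Ys j" "\<lambda>ys. ys j" \<phi>] assms by simp
qed

lemma PiE_fiber:
  assumes "j \<in> I" "y \<in> Ys j"
  shows "{ys\<in>PiE I Ys. ys j = y} = PiE I (Ys(j := {y}))"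
  using assms by (auto simp: PiE_def Pi_def extensional_def split: if_splits)

definition prodm :: "nat set \<Rightarrow> real \<Rightarrow> (nat \<Rightarrow> 'y \<Rightarrow> real) \<Rightarrow> (nat \<Rightarrow> 'y) \<Rightarrow> real" where
  "prodm I c h ys = c * (\<Prod>k\<in>I. h k (ys k) / c)"

lemma prodm_props:
  fixes h :: "nat \<Rightarrow> 'y \<Rightarrow> real"
  assumes fI: "finite I" and ne: "I \<noteq> {}" and fY: "\<forall>k\<in>I. finite (Ys k)"
    and nn: "\<forall>k\<in>I. \<forall>y\<in>Ys k. 0 \<le> h k y" and s: "\<forall>k\<in>I. sum (h k) (Ys k) = c"
  shows "\<forall>ys\<in>PiE I Ys. 0 \<le> prodm I c h ys"
    and "\<forall>j\<in>I. \<forall>y\<in>Ys j. (\<Sum>ys\<in>{ys\<in>PiE I Ys. ys j = y}. prodm I c h ys) = h j y"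
proof -
  obtain k0 where k0: "k0 \<in> I" using ne by auto
  have c0: "0 \<le> c" using s k0 nn sum_nonneg by metis
  show "\<forall>ys\<in>PiE I Ys. 0 \<le> prodm I c h ys"
    unfolding prodm_def using c0 nn by (auto intro!: prod_nonneg mult_nonneg_nonneg simp: PiE_def Pi_def)
  show "\<forall>j\<in>I. \<forall>y\<in>Ys j. (\<Sum>ys\<in>{ys\<in>PiE I Ys. ys j = y}. prodm I c h ys) = h j y"
  proof (intro ballI)
    fix j y assume j: "j \<in> I" and y: "y \<in> Ys j"
    show "(\<Sum>ys\<in>{ys\<in>PiE I Ys. ys j = y}. prodm I c h ys) = h j y"
    proof (cases "c = 0")
      case True
      have "h j y = 0" using s j y nn fY True sum_nonneg_eq_0_iff by metis
      then show ?thesis using True by (simp add: prodm_def)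
    next
      case False
      have "(\<Sum>ys\<in>{ys\<in>PiE I Ys. ys j = y}. prodm I c h ys)
          = c * (\<Sum>ys\<in>PiE I (Ys(j := {y})). \<Prod>k\<in>I. h k (ys k) / c)"
        unfolding PiE_fiber[of j I y Ys, OF j y] prodm_def by (simp add: sum_distrib_left)
      also have "(\<Sum>ys\<in>PiE I (Ys(j := {y})). \<Prod>k\<in>I. h k (ys k) / c)
          = (\<Prod>k\<in>I. \<Sum>z\<in>(Ys(j := {y})) k. h k z / c)"
        using prod_sum_PiE[of I "Ys(j := {y})" "\<lambda>k z. h k z / c"] fI fY by auto
      also have "\<dots> = (\<Prod>k\<in>I. if k = j then h j y / c else 1)"
      proof (rule prod.cong[OF refl])
        fix k assume k: "k \<in> I"
        show "(\<Sum>z\<in>(Ys(j := {y})) k. h k z / c) = (if k = j then h j y / c else 1)"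
          using s k False by (auto simp: sum_divide_distrib[symmetric])
      qed
      also have "\<dots> = h j y / c" using fI j by (simp add: prod.delta)
      finally show ?thesis using False by simp
    qed
  qed
qed

lemma coupling_L:
  fixes Ys :: "nat \<Rightarrow> 'y set" and f g :: "nat \<Rightarrow> 'y \<Rightarrow> real"
  assumes fI: "finite I" and ne: "I \<noteq> {}" and fY: "\<forall>k\<in>I. finite (Ys k)"
    and nn: "\<forall>k\<in>I. \<forall>y\<in>Ys k. 0 \<le> f k y \<and> 0 \<le> g k y"
    and sf: "\<forall>k\<in>I. sum (f k) (Ys k) = F" and sg: "\<forall>k\<in>I. sum (g k) (Ys k) = G"
  shows "\<exists>F' G' j0. j0 \<in> I \<and> (\<forall>ys\<in>PiE I Ys. 0 \<le> F' ys \<and> 0 \<le> G' ys)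
     \<and> (\<forall>j\<in>I. \<forall>y\<in>Ys j. sum F' {ys\<in>PiE I Ys. ys j = y} = f j y
                          \<and> sum G' {ys\<in>PiE I Ys. ys j = y} = g j y)
     \<and> (\<Sum>y\<in>Ys j0. min (f j0 y) (g j0 y)) \<le> (\<Sum>ys\<in>PiE I Ys. min (F' ys) (G' ys))"
proof -
  define ov where "ov k = (\<Sum>y\<in>Ys k. min (f k y) (g k y))" for k
  have "Min (ov ` I) \<in> ov ` I" using fI ne by (intro Min_in) auto
  then obtain j0 where j0: "j0 \<in> I" "ov j0 = Min (ov ` I)" by auto
  define c where "c = ov j0"
  have cle: "\<forall>k\<in>I. c \<le> ov k" using j0 fI unfolding c_def by auto
  have c0: "0 \<le> c" unfolding c_def ov_def using nn j0 by (auto intro!: sum_nonneg)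
  define hw where "hw k y = c / ov k * min (f k y) (g k y)" for k y
  define hf where "hf k y = f k y - hw k y" for k y
  define hg where "hg k y = g k y - hw k y" for k y
  have ok0: "\<forall>k\<in>I. 0 \<le> ov k" unfolding ov_def using nn by (auto intro!: sum_nonneg)
  have rat: "\<forall>k\<in>I. 0 \<le> c / ov k \<and> c / ov k \<le> 1"
  proof
    fix k assume k: "k \<in> I"
    show "0 \<le> c / ov k \<and> c / ov k \<le> 1"
      using cle k ok0 c0 by (cases "ov k = 0") (auto simp: divide_le_eq_1)
  qed
  have hw_nn: "\<forall>k\<in>I. \<forall>y\<in>Ys k. 0 \<le> hw k y" unfolding hw_def using rat nn by (simp del: times_divide_eq_left)
  have hw_le: "\<forall>k\<in>I. \<forall>y\<in>Ys k. hw k y \<le> min (f k y) (g k y)"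
  proof (intro ballI)
    fix k y assume k: "k \<in> I" and y: "y \<in> Ys k"
    have "0 \<le> min (f k y) (g k y)" using nn k y by auto
    then show "hw k y \<le> min (f k y) (g k y)" unfolding hw_def
      using rat k mult_left_le_one_le by blast
  qed
  have hw_s: "\<forall>k\<in>I. sum (hw k) (Ys k) = c"
  proof
    fix k assume k: "k \<in> I"
    have "sum (hw k) (Ys k) = c / ov k * ov k" unfolding hw_def ov_def by (simp add: sum_distrib_left)
    also have "\<dots> = c" using cle k c0 by (cases "ov k = 0") auto
    finally show "sum (hw k) (Ys k) = c" .
  qed
  have hf_nn: "\<forall>k\<in>I. \<forall>y\<in>Ys k. 0 \<le> hf k y" unfolding hf_def using hw_le by force
  have hg_nn: "\<forall>k\<in>I. \<forall>y\<in>Ys k. 0 \<le> hg k y" unfolding hg_def using hw_le by force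
  have hf_s: "\<forall>k\<in>I. sum (hf k) (Ys k) = F - c" unfolding hf_def using sf hw_s by (simp add: sum_subtractf)
  have hg_s: "\<forall>k\<in>I. sum (hg k) (Ys k) = G - c" unfolding hg_def using sg hw_s by (simp add: sum_subtractf)
  note W = prodm_props[OF fI ne fY hw_nn hw_s]
  note Mu = prodm_props[OF fI ne fY hf_nn hf_s]
  note Nu = prodm_props[OF fI ne fY hg_nn hg_s]
  define F' where "F' ys = prodm I c hw ys + prodm I (F - c) hf ys" for ys
  define G' where "G' ys = prodm I c hw ys + prodm I (G - c) hg ys" for ys
  have "finite (PiE I Ys)" using fI fY by (intro finite_PiE) auto
  have "(\<Sum>y\<in>Ys j0. min (f j0 y) (g j0 y)) = (\<Sum>ys\<in>PiE I Ys. prodm I c hw ys)"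
    using PiE_group[OF fI fY j0(1), of "prodm I c hw"] W(2) j0(1) hw_s
    unfolding c_def ov_def by simp
  also have "\<dots> \<le> (\<Sum>ys\<in>PiE I Ys. min (F' ys) (G' ys))"
    unfolding F'_def G'_def using Mu(1) Nu(1) by (intro sum_mono) auto
  finally have fin: "(\<Sum>y\<in>Ys j0. min (f j0 y) (g j0 y)) \<le> (\<Sum>ys\<in>PiE I Ys. min (F' ys) (G' ys))" .
  show ?thesis
  proof (intro exI conjI)
    show "j0 \<in> I" by fact
    show "\<forall>ys\<in>PiE I Ys. 0 \<le> F' ys \<and> 0 \<le> G' ys" unfolding F'_def G'_def using W(1) Mu(1) Nu(1) by auto
    show "\<forall>j\<in>I. \<forall>y\<in>Ys j. sum F' {ys\<in>PiE I Ys. ys j = y} = f j y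
                          \<and> sum G' {ys\<in>PiE I Ys. ys j = y} = g j y"
      unfolding F'_def G'_def using W(2) Mu(2) Nu(2) by (simp add: sum.distrib hf_def hg_def)
    show "(\<Sum>y\<in>Ys j0. min (f j0 y) (g j0 y)) \<le> (\<Sum>ys\<in>PiE I Ys. min (F' ys) (G' ys))" by (fact fin)
  qed
qed




lemma val_rewrite:
  assumes "finite Th" "finite Y" "finite A"
  shows "(\<Sum>th\<in>Th. \<Sum>y\<in>Y. P th y * eu A u th (\<sigma> y))
       = (\<Sum>y\<in>Y. \<Sum>a\<in>A. \<sigma> y a * (\<Sum>th\<in>Th. P th y * u th a))"
proof -
  have "(\<Sum>th\<in>Th. \<Sum>y\<in>Y. P th y * eu A u th (\<sigma> y))
      = (\<Sum>th\<in>Th. \<Sum>y\<in>Y. \<Sum>a\<in>A. \<sigma> y a * (P th y * u th a))"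
    unfolding eu_def by (simp add: sum_distrib_left mult_ac)
  also have "\<dots> = (\<Sum>y\<in>Y. \<Sum>th\<in>Th. \<Sum>a\<in>A. \<sigma> y a * (P th y * u th a))"
    by (rule sum.swap)
  also have "\<dots> = (\<Sum>y\<in>Y. \<Sum>a\<in>A. \<Sum>th\<in>Th. \<sigma> y a * (P th y * u th a))"
    by (rule sum.cong[OF refl], rule sum.swap)
  also have "\<dots> = (\<Sum>y\<in>Y. \<Sum>a\<in>A. \<sigma> y a * (\<Sum>th\<in>Th. P th y * u th a))"
    by (simp add: sum_distrib_left)
  finally show ?thesis .
qed

lemma VF:
  fixes P :: "'th \<Rightarrow> 'y \<Rightarrow> real" and u :: "'th \<Rightarrow> 'a \<Rightarrow> real"
  assumes fT: "finite Th" and fY: "finite Y" and fA: "finite A" and nA: "A \<noteq> {}"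
  defines "B \<equiv> (\<Sum>y\<in>Y. Max ((\<lambda>a. \<Sum>th\<in>Th. P th y * u th a) ` A))"
  shows "\<forall>\<sigma>. (\<forall>y\<in>Y. distr A (\<sigma> y)) \<longrightarrow> (\<Sum>th\<in>Th. \<Sum>y\<in>Y. P th y * eu A u th (\<sigma> y)) \<le> B"
    and "\<exists>\<sigma>. (\<forall>y\<in>Y. distr A (\<sigma> y)) \<and> (\<Sum>th\<in>Th. \<Sum>y\<in>Y. P th y * eu A u th (\<sigma> y)) = B"
    and "V1 Th Y P A u = B"
proof -
  define v where "v y a = (\<Sum>th\<in>Th. P th y * u th a)" for y a
  have B: "B = (\<Sum>y\<in>Y. Max (v y ` A))" unfolding B_def v_def by simp
  show 1: "\<forall>\<sigma>. (\<forall>y\<in>Y. distr A (\<sigma> y)) \<longrightarrow> (\<Sum>th\<in>Th. \<Sum>y\<in>Y. P th y * eu A u th (\<sigma> y)) \<le> B"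
  proof (intro allI impI)
    fix \<sigma> assume d: "\<forall>y\<in>Y. distr A (\<sigma> y)"
    have "(\<Sum>th\<in>Th. \<Sum>y\<in>Y. P th y * eu A u th (\<sigma> y)) = (\<Sum>y\<in>Y. \<Sum>a\<in>A. \<sigma> y a * v y a)"
      unfolding v_def using val_rewrite[OF fT fY fA] by simp
    also have "\<dots> \<le> (\<Sum>y\<in>Y. \<Sum>a\<in>A. \<sigma> y a * Max (v y ` A))"
      using d fA by (intro sum_mono mult_left_mono) (auto simp: distr_def)
    also have "\<dots> = B" using d unfolding B by (simp add: sum_distrib_right[symmetric] distr_def)
    finally show "(\<Sum>th\<in>Th. \<Sum>y\<in>Y. P th y * eu A u th (\<sigma> y)) \<le> B" .
  qed
  have "\<forall>y. \<exists>a\<in>A. v y a = Max (v y ` A)"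
  proof
    fix y have "Max (v y ` A) \<in> v y ` A" using fA nA by (intro Max_in) auto
    then show "\<exists>a\<in>A. v y a = Max (v y ` A)" by auto
  qed
  then obtain am where am: "\<And>y. am y \<in> A" "\<And>y. v y (am y) = Max (v y ` A)" by metis
  define \<sigma>0 where "\<sigma>0 y a = (if a = am y then 1 else 0::real)" for y a
  have d0: "\<forall>y\<in>Y. distr A (\<sigma>0 y)" unfolding distr_def \<sigma>0_def using am fA by simp
  have e0: "(\<Sum>th\<in>Th. \<Sum>y\<in>Y. P th y * eu A u th (\<sigma>0 y)) = B"
  proof -
    have "(\<Sum>th\<in>Th. \<Sum>y\<in>Y. P th y * eu A u th (\<sigma>0 y)) = (\<Sum>y\<in>Y. \<Sum>a\<in>A. \<sigma>0 y a * v y a)"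
      unfolding v_def using val_rewrite[OF fT fY fA] by simp
    also have "\<dots> = (\<Sum>y\<in>Y. v y (am y))"
    proof (rule sum.cong[OF refl])
      fix y
      have "(\<Sum>a\<in>A. \<sigma>0 y a * v y a) = (\<Sum>a\<in>A. if a = am y then v y a else 0)"
        unfolding \<sigma>0_def by (intro sum.cong refl) auto
      then show "(\<Sum>a\<in>A. \<sigma>0 y a * v y a) = v y (am y)" using am(1)[of y] fA by (simp add: sum.delta)
    qed
    also have "\<dots> = B" unfolding B using am by simp
    finally show ?thesis .
  qed
  show "\<exists>\<sigma>. (\<forall>y\<in>Y. distr A (\<sigma> y)) \<and> (\<Sum>th\<in>Th. \<Sum>y\<in>Y. P th y * eu A u th (\<sigma> y)) = B"
    using d0 e0 by blast
  define vf where "vf \<sigma> = (\<Sum>th\<in>Th. \<Sum>y\<in>Y. P th y * eu A u th (\<sigma> y))" for \<sigma>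
  define S where "S = {\<sigma>. \<forall>y\<in>Y. distr A (\<sigma> y)}"
  have V: "V1 Th Y P A u = Sup (vf ` S)" unfolding V1_def vf_def S_def by simp
  have m1: "B \<in> vf ` S" unfolding S_def
    by (rule image_eqI[where x=\<sigma>0]) (use d0 e0 in \<open>auto simp: vf_def\<close>)
  have m2: "\<And>x. x \<in> vf ` S \<Longrightarrow> x \<le> B" unfolding S_def vf_def using 1 by blast
  have "Sup (vf ` S) = B" by (rule cSup_eq_maximum[OF m1 m2])
  then show "V1 Th Y P A u = B" by (rule trans[OF V])
qed



lemma V1_two:
  fixes P :: "nat \<Rightarrow> 'y \<Rightarrow> real" and u :: "nat \<Rightarrow> 'a \<Rightarrow> real"
  assumes "finite Y"
  shows "V1 {1,2} Y P {a1,a2} u = (\<Sum>y\<in>Y. max (P 1 y * u 1 a1 + P 2 y * u 2 a1) (P 1 y * u 1 a2 + P 2 y * u 2 a2))"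
proof -
  have "V1 {1,2} Y P {a1,a2} u = (\<Sum>y\<in>Y. Max ((\<lambda>a. \<Sum>th\<in>{1,2::nat}. P th y * u th a) ` {a1,a2}))"
    using VF(3)[of "{1,2::nat}" Y "{a1,a2}" P u] assms by blast
  also have "\<dots> = (\<Sum>y\<in>Y. max (P 1 y * u 1 a1 + P 2 y * u 2 a1) (P 1 y * u 1 a2 + P 2 y * u 2 a2))"
    by (intro sum.cong refl) (simp add: max_def)
  finally show ?thesis .
qed
lemma eu_lower:
  assumes "finite A" "distr A \<alpha>"
  shows "Min (u th ` A) \<le> eu A u th \<alpha>"
proof -
  have ne: "A \<noteq> {}" using assms by (auto simp: distr_def)
  have "Min (u th ` A) = (\<Sum>a\<in>A. \<alpha> a * Min (u th ` A))"
    using assms by (simp add: distr_def sum_distrib_right[symmetric])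
  also have "\<dots> \<le> eu A u th \<alpha>" unfolding eu_def
    using assms by (intro sum_mono mult_left_mono) (auto simp: distr_def)
  finally show ?thesis .
qed

lemma max_le_sum_max:
  fixes h :: "'x \<Rightarrow> 'a \<Rightarrow> real"
  assumes "finite A" "A \<noteq> {}" "finite X"
  shows "Max ((\<lambda>a. \<Sum>x\<in>X. h x a) ` A) \<le> (\<Sum>x\<in>X. Max (h x ` A))"
  using assms by (subst Max_le_iff) (auto intro!: sum_mono Max_ge)




lemma max_decomp:
  fixes P :: "nat \<Rightarrow> 'y \<Rightarrow> real"
  assumes "sum (P 1) Y = 1" "sum (P 2) Y = 1"
  shows "(\<Sum>y\<in>Y. max (P 1 y * x1 + P 2 y * x2) (P 1 y * e1 + P 2 y * e2))
       = e1 + e2 + (\<Sum>y\<in>Y. max 0 ((x1 - e1) * P 1 y + (x2 - e2) * P 2 y))"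
proof -
  have "(\<Sum>y\<in>Y. max (P 1 y * x1 + P 2 y * x2) (P 1 y * e1 + P 2 y * e2))
      = (\<Sum>y\<in>Y. (P 1 y * e1 + P 2 y * e2) + max 0 ((x1 - e1) * P 1 y + (x2 - e2) * P 2 y))"
    by (intro sum.cong refl) (simp add: max_def algebra_simps)
  also have "\<dots> = (\<Sum>y\<in>Y. P 1 y) * e1 + (\<Sum>y\<in>Y. P 2 y) * e2 + (\<Sum>y\<in>Y. max 0 ((x1 - e1) * P 1 y + (x2 - e2) * P 2 y))"
    by (simp add: sum.distrib sum_distrib_right)
  finally show ?thesis using assms by simp
qed

lemma Dconst:
  fixes P :: "nat \<Rightarrow> 'y \<Rightarrow> real"
  assumes "sum (P 1) Y = 1" "sum (P 2) Y = 1" "\<forall>y\<in>Y. 0 \<le> P 1 y \<and> 0 \<le> P 2 y"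
  shows "0 \<le> d1 \<Longrightarrow> 0 \<le> d2 \<Longrightarrow> (\<Sum>y\<in>Y. max 0 (d1 * P 1 y + d2 * P 2 y)) = d1 + d2"
    and "d1 \<le> 0 \<Longrightarrow> d2 \<le> 0 \<Longrightarrow> (\<Sum>y\<in>Y. max 0 (d1 * P 1 y + d2 * P 2 y)) = 0"
proof -
  assume "0 \<le> d1" "0 \<le> d2"
  then have "(\<Sum>y\<in>Y. max 0 (d1 * P 1 y + d2 * P 2 y)) = (\<Sum>y\<in>Y. d1 * P 1 y + d2 * P 2 y)"
    using assms(3) by (intro sum.cong refl) (simp add: max_def)
  also have "\<dots> = d1 + d2" using assms by (simp add: sum.distrib sum_distrib_left[symmetric])
  finally show "(\<Sum>y\<in>Y. max 0 (d1 * P 1 y + d2 * P 2 y)) = d1 + d2" .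
next
  assume a: "d1 \<le> 0" "d2 \<le> 0"
  have "\<forall>y\<in>Y. d1 * P 1 y + d2 * P 2 y \<le> 0"
    using a assms(3) by (auto intro!: add_nonpos_nonpos mult_nonpos_nonneg)
  then show "(\<Sum>y\<in>Y. max 0 (d1 * P 1 y + d2 * P 2 y)) = 0"
    by (intro sum.neutral ballI) (simp add: max.absorb1)
qed

lemma sum_max_min:
  fixes a b :: "'x \<Rightarrow> real"
  shows "(\<Sum>x\<in>X. max 0 (a x - b x)) = (\<Sum>x\<in>X. a x) - (\<Sum>x\<in>X. min (a x) (b x))"
  unfolding sum_subtractf[symmetric] by (intro sum.cong refl) (simp add: max_def min_def)

lemma coup_w:
  fixes Ys :: "nat \<Rightarrow> 'y set" and Ps :: "nat \<Rightarrow> nat \<Rightarrow> 'y \<Rightarrow> real"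
  assumes m: "m \<ge> 1" and ex: "\<forall>j\<in>{1..m}. is_experiment {1,2} (Ys j) (Ps j)"
    and w1: "0 < w1" and w2: "0 < w2"
  shows "\<exists>Q j0. Q \<in> couplings {1,2} m Ys Ps \<and> j0 \<in> {1..m} \<and>
     (\<Sum>y\<in>Ys j0. min (w1 * Ps j0 1 y) (w2 * Ps j0 2 y))
       \<le> (\<Sum>ys\<in>joint_signals m Ys. min (w1 * Q 1 ys) (w2 * Q 2 ys))"
proof -
  let ?I = "{1..m}"
  have fI: "finite ?I" and neI: "?I \<noteq> {}" using m by auto
  have fY: "\<forall>k\<in>?I. finite (Ys k)" using ex by (auto simp: is_experiment_def)
  have nn: "\<forall>k\<in>?I. \<forall>y\<in>Ys k. 0 \<le> w1 * Ps k 1 y \<and> 0 \<le> w2 * Ps k 2 y"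
    using ex w1 w2 by (auto simp: is_experiment_def distr_def)
  have sf: "\<forall>k\<in>?I. sum (\<lambda>y. w1 * Ps k 1 y) (Ys k) = w1"
    using ex by (auto simp: is_experiment_def distr_def sum_distrib_left[symmetric])
  have sg: "\<forall>k\<in>?I. sum (\<lambda>y. w2 * Ps k 2 y) (Ys k) = w2"
    using ex by (auto simp: is_experiment_def distr_def sum_distrib_left[symmetric])
  obtain F' G' j0 where j0: "j0 \<in> ?I" and FG0: "\<forall>ys\<in>PiE ?I Ys. 0 \<le> F' ys \<and> 0 \<le> G' ys"
    and marg: "\<forall>j\<in>?I. \<forall>y\<in>Ys j. sum F' {ys\<in>PiE ?I Ys. ys j = y} = w1 * Ps j 1 y
                          \<and> sum G' {ys\<in>PiE ?I Ys. ys j = y} = w2 * Ps j 2 y"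
    and mn: "(\<Sum>y\<in>Ys j0. min (w1 * Ps j0 1 y) (w2 * Ps j0 2 y)) \<le> (\<Sum>ys\<in>PiE ?I Ys. min (F' ys) (G' ys))"
    using coupling_L[OF fI neI fY, of "\<lambda>k y. w1 * Ps k 1 y" "\<lambda>k y. w2 * Ps k 2 y", OF nn sf sg] by blast
  define Q where "Q th ys = (if th = (1::nat) then F' ys / w1 else G' ys / w2)" for th ys
  have one: "1 \<in> ?I" using m by auto
  have Qm: "\<forall>th\<in>{1,2}. \<forall>j\<in>?I. \<forall>y\<in>Ys j. (\<Sum>ys\<in>{ys\<in>PiE ?I Ys. ys j = y}. Q th ys) = Ps j th y"
    using marg w1 w2 by (auto simp: Q_def sum_divide_distrib[symmetric])
  have Qc: "Q \<in> couplings {1,2} m Ys Ps"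
    unfolding couplings_def joint_signals_def
  proof (intro CollectI ballI conjI)
    fix th :: nat assume th: "th \<in> {1,2}"
    show "distr (PiE ?I Ys) (Q th)" unfolding distr_def
    proof
      show "\<forall>ys\<in>PiE ?I Ys. 0 \<le> Q th ys" using FG0 w1 w2 by (auto simp: Q_def)
      have "sum (Q th) (PiE ?I Ys) = (\<Sum>y\<in>Ys 1. \<Sum>ys\<in>{ys\<in>PiE ?I Ys. ys 1 = y}. Q th ys)"
        using PiE_group[OF fI fY one] by simp
      also have "\<dots> = (\<Sum>y\<in>Ys 1. Ps 1 th y)"
        using Qm th one by (intro sum.cong refl) blast
      also have "\<dots> = 1" using ex one th by (auto simp: is_experiment_def distr_def)
      finally show "sum (Q th) (PiE ?I Ys) = 1" .
    qed
  next
    fix th :: nat and j y assume "th \<in> {1,2}" "j \<in> ?I" "y \<in> Ys j"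
    then show "(\<Sum>ys\<in>{ys\<in>PiE ?I Ys. ys j = y}. Q th ys) = Ps j th y"
      using Qm by blast
  qed
  have "(\<Sum>ys\<in>PiE ?I Ys. min (F' ys) (G' ys)) = (\<Sum>ys\<in>PiE ?I Ys. min (w1 * Q 1 ys) (w2 * Q 2 ys))"
    using w1 w2 by (simp add: Q_def)
  then show ?thesis using Qc j0 mn unfolding joint_signals_def by auto
qed




lemma coup_distr: "Q \<in> couplings Th m Ys Ps \<Longrightarrow> th \<in> Th \<Longrightarrow> distr (joint_signals m Ys) (Q th)"
  unfolding couplings_def by auto

lemma key_coupling:
  fixes Ys :: "nat \<Rightarrow> 'y set" and Ps :: "nat \<Rightarrow> nat \<Rightarrow> 'y \<Rightarrow> real"
  assumes m: "m \<ge> 1" and ex: "\<forall>j\<in>{1..m}. is_experiment {1,2} (Ys j) (Ps j)"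
  shows "\<exists>Q j0. Q \<in> couplings {1,2} m Ys Ps \<and> j0 \<in> {1..m} \<and>
     (\<Sum>ys\<in>joint_signals m Ys. max 0 (d1 * Q 1 ys + d2 * Q 2 ys))
       \<le> (\<Sum>y\<in>Ys j0. max 0 (d1 * Ps j0 1 y + d2 * Ps j0 2 y))"
proof -
  let ?J = "joint_signals m Ys"
  have QP: "sum (Q 1) ?J = 1 \<and> sum (Q 2) ?J = 1 \<and> (\<forall>ys\<in>?J. 0 \<le> Q 1 ys \<and> 0 \<le> Q 2 ys)"
    if "Q \<in> couplings {1,2} m Ys Ps" for Q
    using coup_distr[OF that, of 1] coup_distr[OF that, of 2] by (auto simp: distr_def)
  have PP: "sum (Ps j 1) (Ys j) = 1 \<and> sum (Ps j 2) (Ys j) = 1 \<and> (\<forall>y\<in>Ys j. 0 \<le> Ps j 1 y \<and> 0 \<le> Ps j 2 y)"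
    if "j \<in> {1..m}" for j
    using ex that by (auto simp: is_experiment_def distr_def)
  consider "(0 \<le> d1 \<and> 0 \<le> d2) \<or> (d1 \<le> 0 \<and> d2 \<le> 0)" | "0 < d1 \<and> d2 < 0" | "d1 < 0 \<and> 0 < d2"
    by linarith
  then show ?thesis
  proof cases
    case 1
    obtain Q j0 where Q: "Q \<in> couplings {1,2} m Ys Ps" "j0 \<in> {1..m}"
      using coup_w[OF m ex, of 1 1] by auto
    have "(\<Sum>ys\<in>?J. max 0 (d1 * Q 1 ys + d2 * Q 2 ys)) = (\<Sum>y\<in>Ys j0. max 0 (d1 * Ps j0 1 y + d2 * Ps j0 2 y))"
      using 1 Dconst[of Q ?J d1 d2] Dconst[of "Ps j0" "Ys j0" d1 d2] QP[OF Q(1)] PP[OF Q(2)] by auto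
    then show ?thesis using Q by (intro exI[of _ Q] exI[of _ j0]) simp
  next
    case 2
    obtain Q j0 where Q: "Q \<in> couplings {1,2} m Ys Ps" "j0 \<in> {1..m}"
      and mn: "(\<Sum>y\<in>Ys j0. min (d1 * Ps j0 1 y) ((-d2) * Ps j0 2 y))
       \<le> (\<Sum>ys\<in>?J. min (d1 * Q 1 ys) ((-d2) * Q 2 ys))"
      using coup_w[OF m ex, of d1 "-d2"] 2 by auto
    have "(\<Sum>ys\<in>?J. max 0 (d1 * Q 1 ys + d2 * Q 2 ys)) = (\<Sum>ys\<in>?J. max 0 (d1 * Q 1 ys - (-d2) * Q 2 ys))"
      by simp
    also have "\<dots> = d1 - (\<Sum>ys\<in>?J. min (d1 * Q 1 ys) ((-d2) * Q 2 ys))"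
      unfolding sum_max_min using QP[OF Q(1)] by (simp add: sum_distrib_left[symmetric])
    also have "\<dots> \<le> d1 - (\<Sum>y\<in>Ys j0. min (d1 * Ps j0 1 y) ((-d2) * Ps j0 2 y))" using mn by simp
    also have "\<dots> = (\<Sum>y\<in>Ys j0. max 0 (d1 * Ps j0 1 y - (-d2) * Ps j0 2 y))"
      unfolding sum_max_min using PP[OF Q(2)] by (simp add: sum_distrib_left[symmetric])
    also have "\<dots> = (\<Sum>y\<in>Ys j0. max 0 (d1 * Ps j0 1 y + d2 * Ps j0 2 y))" by simp
    finally show ?thesis using Q by (intro exI[of _ Q] exI[of _ j0]) simp
  next
    case 3
    obtain Q j0 where Q: "Q \<in> couplings {1,2} m Ys Ps" "j0 \<in> {1..m}"
      and mn: "(\<Sum>y\<in>Ys j0. min ((-d1) * Ps j0 1 y) (d2 * Ps j0 2 y))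
       \<le> (\<Sum>ys\<in>?J. min ((-d1) * Q 1 ys) (d2 * Q 2 ys))"
      using coup_w[OF m ex, of "-d1" d2] 3 by auto
    have mn': "(\<Sum>y\<in>Ys j0. min (d2 * Ps j0 2 y) ((-d1) * Ps j0 1 y))
       \<le> (\<Sum>ys\<in>?J. min (d2 * Q 2 ys) ((-d1) * Q 1 ys))"
      using mn by (simp add: min.commute)
    have "(\<Sum>ys\<in>?J. max 0 (d1 * Q 1 ys + d2 * Q 2 ys)) = (\<Sum>ys\<in>?J. max 0 (d2 * Q 2 ys - (-d1) * Q 1 ys))"
      by (simp add: add.commute)
    also have "\<dots> = d2 - (\<Sum>ys\<in>?J. min (d2 * Q 2 ys) ((-d1) * Q 1 ys))"
      unfolding sum_max_min using QP[OF Q(1)] by (simp add: sum_distrib_left[symmetric])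
    also have "\<dots> \<le> d2 - (\<Sum>y\<in>Ys j0. min (d2 * Ps j0 2 y) ((-d1) * Ps j0 1 y))" using mn' by simp
    also have "\<dots> = (\<Sum>y\<in>Ys j0. max 0 (d2 * Ps j0 2 y - (-d1) * Ps j0 1 y))"
      unfolding sum_max_min using PP[OF Q(2)] by (simp add: sum_distrib_left[symmetric])
    also have "\<dots> = (\<Sum>y\<in>Ys j0. max 0 (d1 * Ps j0 1 y + d2 * Ps j0 2 y))" by (simp add: add.commute)
    finally show ?thesis using Q by (intro exI[of _ Q] exI[of _ j0]) simp
  qed
qed




theorem theorem1:
  fixes A :: "'a set" and u :: "nat \<Rightarrow> 'a \<Rightarrow> real"
    and m :: nat and Ys :: "nat \<Rightarrow> nat set" and Ps :: "nat \<Rightarrow> nat \<Rightarrow> nat \<Rightarrow> real"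
    and RY :: "nat set" and R :: "nat \<Rightarrow> nat \<Rightarrow> real"
  assumes "card A = 2"
    and "m \<ge> 1"
    and "\<forall>j\<in>{1..m}. is_experiment {1,2} (Ys j) (Ps j)"
    and "blackwell_sup {1,2} m Ys Ps RY R"
  shows "Vm {1,2} m Ys Ps A u = V1 {1,2} RY R A u
       \<and> V1 {1,2} RY R A u = Max ((\<lambda>j. V1 {1,2} (Ys j) (Ps j) A u) ` {1..m})"
proof -
  obtain a1 a2 where A: "A = {a1,a2}" "a1 \<noteq> a2" using assms(1) card_2_iff by metis
  have fA: "finite A" and nA: "A \<noteq> {}" using A by auto
  have m: "m \<ge> 1" and ex: "\<forall>j\<in>{1..m}. is_experiment {1,2} (Ys j) (Ps j)" using assms by auto
  let ?I = "{1..m}"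
  let ?J = "joint_signals m Ys"
  have fI: "finite ?I" and neI: "?I \<noteq> {}" using m by auto
  have fY: "\<forall>k\<in>?I. finite (Ys k)" using ex by (auto simp: is_experiment_def)
  have neY: "\<forall>k\<in>?I. Ys k \<noteq> {}" using ex by (auto simp: is_experiment_def)
  have fJ: "finite ?J" unfolding joint_signals_def using fY by (intro finite_PiE) auto
  have neJ: "?J \<noteq> {}" unfolding joint_signals_def using neY by (auto simp: PiE_eq_empty_iff)
  define d1 where "d1 = u 1 a1 - u 1 a2"
  define d2 where "d2 = u 2 a1 - u 2 a2"
  define Vj where "Vj j = V1 {1,2} (Ys j) (Ps j) A u" for j
  define M where "M = Max (Vj ` ?I)"
  have Vj_le: "\<forall>j\<in>?I. Vj j \<le> M" unfolding M_def using fI by auto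
  have M_in: "M \<in> Vj ` ?I" unfolding M_def using fI neI by (intro Max_in) auto
  have form: "V1 {1,2} Y P A u = u 1 a2 + u 2 a2 + (\<Sum>y\<in>Y. max 0 (d1 * P 1 y + d2 * P 2 y))"
    if "finite Y" "sum (P 1) Y = 1" "sum (P 2) Y = 1" for Y and P :: "nat \<Rightarrow> 'y \<Rightarrow> real"
    unfolding A V1_two[OF that(1)] max_decomp[OF that(2,3)] d1_def d2_def by simp
  have PP: "sum (Ps j 1) (Ys j) = 1 \<and> sum (Ps j 2) (Ys j) = 1 \<and> (\<forall>y\<in>Ys j. 0 \<le> Ps j 1 y \<and> 0 \<le> Ps j 2 y)"
    if "j \<in> ?I" for j
    using ex that by (auto simp: is_experiment_def distr_def)
  obtain Q j0 where Qc: "Q \<in> couplings {1,2} m Ys Ps" and j0: "j0 \<in> ?I"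
    and QD: "(\<Sum>ys\<in>?J. max 0 (d1 * Q 1 ys + d2 * Q 2 ys))
       \<le> (\<Sum>y\<in>Ys j0. max 0 (d1 * Ps j0 1 y + d2 * Ps j0 2 y))"
    using key_coupling[OF m ex, of d1 d2] by blast
  have QP: "sum (Q 1) ?J = 1 \<and> sum (Q 2) ?J = 1 \<and> (\<forall>ys\<in>?J. 0 \<le> Q 1 ys \<and> 0 \<le> Q 2 ys)"
    using coup_distr[OF Qc, of 1] coup_distr[OF Qc, of 2] by (auto simp: distr_def)
  have VQ: "V1 {1,2} ?J Q A u \<le> M"
  proof -
    have "V1 {1,2} ?J Q A u \<le> Vj j0"
      unfolding Vj_def using form[of ?J Q] form[of "Ys j0" "Ps j0"] fJ QP PP[OF j0] fY j0 QD by simp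
    then show ?thesis using Vj_le j0 by force
  qed
  define f where "f = (\<lambda>\<sigma> P. (\<Sum>th\<in>{1,2::nat}. \<Sum>ys\<in>?J. P th ys * eu A u th (\<sigma> ys)))"
  define S0 where "S0 = {\<sigma>. \<forall>ys\<in>?J. distr A (\<sigma> ys)}"
  define C0 where "C0 = couplings {1,2} m Ys Ps"
  have Vm_eq: "Vm {1,2} m Ys Ps A u = Sup ((\<lambda>\<sigma>. Inf (f \<sigma> ` C0)) ` S0)"
    unfolding Vm_def f_def S0_def C0_def by (rule refl)
  have bb: "bdd_below (f \<sigma> ` C0)" if \<sigma>S: "\<sigma> \<in> S0" for \<sigma>
  proof (rule bdd_belowI2)
    fix P assume P: "P \<in> C0"
    have eb: "Min (u th ` A) \<le> eu A u th (\<sigma> ys)" if "ys \<in> ?J" for ys th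
      by (rule eu_lower[OF fA]) (use \<sigma>S that in \<open>simp add: S0_def\<close>)
    have "(\<Sum>th\<in>{1,2::nat}. Min (u th ` A)) = (\<Sum>th\<in>{1,2::nat}. \<Sum>ys\<in>?J. P th ys * Min (u th ` A))"
      using coup_distr[OF P[unfolded C0_def]] by (simp add: sum_distrib_right[symmetric] distr_def)
    also have "\<dots> \<le> f \<sigma> P" unfolding f_def
      using coup_distr[OF P[unfolded C0_def]] eb unfolding distr_def
      by (intro sum_mono mult_left_mono) simp_all
    finally show "(\<Sum>th\<in>{1,2::nat}. Min (u th ` A)) \<le> f \<sigma> P" .
  qed
  have QC0: "Q \<in> C0" using Qc C0_def by simp
  have upper: "Inf (f \<sigma> ` C0) \<le> M" if "\<sigma> \<in> S0" for \<sigma>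
  proof -
    have "Inf (f \<sigma> ` C0) \<le> f \<sigma> Q" by (rule cINF_lower[OF bb[OF that] QC0])
    also have "\<dots> \<le> V1 {1,2} ?J Q A u"
      using VF(1)[of "{1,2::nat}" ?J A Q u] VF(3)[of "{1,2::nat}" ?J A Q u] fJ fA nA that
      unfolding f_def S0_def by auto
    finally show ?thesis using VQ by simp
  qed
  have S0ne: "S0 \<noteq> {}"
  proof -
    have "(\<lambda>ys a. if a = a1 then 1 else 0::real) \<in> S0"
      unfolding S0_def distr_def using fA A by simp
    then show ?thesis by blast
  qed
  have Vm_le: "Vm {1,2} m Ys Ps A u \<le> M"
    unfolding Vm_eq by (rule cSUP_least[OF S0ne upper])
  have Vm_ge: "M \<le> Vm {1,2} m Ys Ps A u"
  proof -
    obtain j where j: "j \<in> ?I" "M = Vj j" using M_in by auto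
    obtain \<sigma>s where \<sigma>s: "\<forall>y\<in>Ys j. distr A (\<sigma>s y)"
      "(\<Sum>th\<in>{1,2::nat}. \<Sum>y\<in>Ys j. Ps j th y * eu A u th (\<sigma>s y)) = Vj j"
      using VF(2)[of "{1,2::nat}" "Ys j" A "Ps j" u] VF(3)[of "{1,2::nat}" "Ys j" A "Ps j" u]
        fY j fA nA unfolding Vj_def by auto
    define \<sigma> where "\<sigma> ys = \<sigma>s (ys j)" for ys
    have \<sigma>S: "\<sigma> \<in> S0" unfolding S0_def \<sigma>_def joint_signals_def using \<sigma>s(1) j(1)
      by (auto simp: PiE_def Pi_def)
    have fv: "f \<sigma> P = Vj j" if P: "P \<in> C0" for P
    proof -
      have marg: "(\<Sum>ys\<in>{ys\<in>?J. ys j = y}. P th ys) = Ps j th y" if "th \<in> {1,2}" "y \<in> Ys j" for th y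
        using P that j(1) unfolding C0_def couplings_def by auto
      have "f \<sigma> P = (\<Sum>th\<in>{1,2::nat}. \<Sum>y\<in>Ys j. \<Sum>ys\<in>{ys\<in>?J. ys j = y}. P th ys * eu A u th (\<sigma>s y))"
        unfolding f_def \<sigma>_def
      proof (rule sum.cong[OF refl])
        fix th
        have "(\<Sum>ys\<in>?J. P th ys * eu A u th (\<sigma>s (ys j)))
            = (\<Sum>y\<in>Ys j. \<Sum>ys\<in>{ys\<in>?J. ys j = y}. P th ys * eu A u th (\<sigma>s (ys j)))"
          unfolding joint_signals_def by (rule PiE_group[OF fI fY j(1)])
        also have "\<dots> = (\<Sum>y\<in>Ys j. \<Sum>ys\<in>{ys\<in>?J. ys j = y}. P th ys * eu A u th (\<sigma>s y))"
          by (intro sum.cong refl) auto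
        finally show "(\<Sum>ys\<in>?J. P th ys * eu A u th (\<sigma>s (ys j)))
            = (\<Sum>y\<in>Ys j. \<Sum>ys\<in>{ys\<in>?J. ys j = y}. P th ys * eu A u th (\<sigma>s y))" .
      qed
      also have "\<dots> = (\<Sum>th\<in>{1,2::nat}. \<Sum>y\<in>Ys j. Ps j th y * eu A u th (\<sigma>s y))"
      proof (rule sum.cong[OF refl], rule sum.cong[OF refl])
        fix th y assume "th \<in> {1,2::nat}" "y \<in> Ys j"
        then show "(\<Sum>ys\<in>{ys\<in>?J. ys j = y}. P th ys * eu A u th (\<sigma>s y)) = Ps j th y * eu A u th (\<sigma>s y)"
          using marg by (simp add: sum_distrib_right[symmetric])
      qed
      also have "\<dots> = Vj j" by (rule \<sigma>s(2))
      finally show ?thesis .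
    qed
    have "Vj j \<le> Inf (f \<sigma> ` C0)"
      using QC0 fv by (intro cINF_greatest) auto
    also have "\<dots> \<le> Sup ((\<lambda>\<sigma>. Inf (f \<sigma> ` C0)) ` S0)"
      by (rule cSUP_upper[OF \<sigma>S], rule bdd_aboveI2[where M=M], rule upper)
    finally show ?thesis unfolding Vm_eq using j by simp
  qed
  define u' where "u' th n = (if n = (0::nat) then u th a1 else u th a2)" for th n
  have relab: "V1 {1,2} Y P {0,1::nat} u' = V1 {1,2} Y P A u" if "finite Y" for Y and P :: "nat \<Rightarrow> nat \<Rightarrow> real"
    unfolding A V1_two[OF that] u'_def by simp
  have bs: "is_experiment {1,2} RY R" "\<forall>j\<in>?I. more_informative {1,2} RY R (Ys j) (Ps j)"
    "\<forall>SY S. is_experiment {1,2} SY S \<and> (\<forall>j\<in>?I. more_informative {1,2} SY S (Ys j) (Ps j))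
        \<longrightarrow> more_informative {1,2} SY S RY R"
    using assms(4) unfolding blackwell_sup_def by auto
  have fRY: "finite RY" using bs(1) by (simp add: is_experiment_def)
  have R_ge: "M \<le> V1 {1,2} RY R A u"
  proof -
    have "\<forall>j\<in>?I. Vj j \<le> V1 {1,2} RY R A u"
    proof
      fix j assume j: "j \<in> ?I"
      have "V1 {1,2} (Ys j) (Ps j) {0,1::nat} u' \<le> V1 {1,2} RY R {0,1::nat} u'"
        using bs(2) j unfolding more_informative_def by auto
      then show "Vj j \<le> V1 {1,2} RY R A u" unfolding Vj_def using relab fRY fY j by simp
    qed
    then show ?thesis using M_in by auto
  qed
  have R_le: "V1 {1,2} RY R A u \<le> M"
  proof -
    obtain h where h: "bij_betw h {0..<card ?J} ?J" using ex_bij_betw_nat_finite[OF fJ] by blast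
    define SY where "SY = {0..<card ?J}"
    define S where "S th n = Q th (h n)" for th n
    have hJ: "\<forall>n\<in>SY. h n \<in> ?J" using h unfolding SY_def bij_betw_def by auto
    have reidx: "(\<Sum>n\<in>SY. g (h n)) = (\<Sum>ys\<in>?J. g ys)" for g :: "(nat \<Rightarrow> nat) \<Rightarrow> real"
      unfolding SY_def using sum.reindex_bij_betw[OF h] by simp
    have Sexp: "is_experiment {1,2} SY S"
      unfolding is_experiment_def distr_def
    proof (intro conjI ballI)
      show "finite SY" unfolding SY_def by simp
      show "SY \<noteq> {}" unfolding SY_def using fJ neJ by (simp add: card_gt_0_iff)
    next
      fix th :: nat and n assume th: "th \<in> {1,2}" and n: "n \<in> SY"
      show "0 \<le> S th n" unfolding S_def using coup_distr[OF Qc th] hJ n by (auto simp: distr_def)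
    next
      fix th :: nat assume th: "th \<in> {1,2}"
      show "sum (S th) SY = 1" unfolding S_def using reidx[of "Q th"] coup_distr[OF Qc th]
        by (simp add: distr_def)
    qed
    have Smi: "\<forall>j\<in>?I. more_informative {1,2} SY S (Ys j) (Ps j)"
    proof
      fix j assume j: "j \<in> ?I"
      show "more_informative {1,2} SY S (Ys j) (Ps j)" unfolding more_informative_def
      proof (intro allI impI)
        fix A'' :: "nat set" and u'' :: "nat \<Rightarrow> nat \<Rightarrow> real"
        assume A'': "finite A'' \<and> A'' \<noteq> {}"
        have fib: "\<forall>y\<in>Ys j. finite {ys\<in>?J. ys j = y}" using fJ by auto
        have marg: "(\<Sum>ys\<in>{ys\<in>?J. ys j = y}. Q th ys) = Ps j th y" if "th \<in> {1,2}" "y \<in> Ys j" for th y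
          using Qc that j unfolding couplings_def by auto
        have "V1 {1,2} (Ys j) (Ps j) A'' u'' = (\<Sum>y\<in>Ys j. Max ((\<lambda>a. \<Sum>th\<in>{1,2::nat}. Ps j th y * u'' th a) ` A''))"
          using VF(3)[of "{1,2::nat}" "Ys j" A'' "Ps j" u''] fY j A'' by auto
        also have "\<dots> = (\<Sum>y\<in>Ys j. Max ((\<lambda>a. \<Sum>ys\<in>{ys\<in>?J. ys j = y}. \<Sum>th\<in>{1,2::nat}. Q th ys * u'' th a) ` A''))"
        proof (rule sum.cong[OF refl])
          fix y assume y: "y \<in> Ys j"
          have "\<And>a. (\<Sum>th\<in>{1,2::nat}. Ps j th y * u'' th a) = (\<Sum>ys\<in>{ys\<in>?J. ys j = y}. \<Sum>th\<in>{1,2::nat}. Q th ys * u'' th a)"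
          proof -
            fix a
            have "(\<Sum>th\<in>{1,2::nat}. Ps j th y * u'' th a) = (\<Sum>th\<in>{1,2::nat}. (\<Sum>ys\<in>{ys\<in>?J. ys j = y}. Q th ys) * u'' th a)"
              using marg[OF _ y] by (intro sum.cong refl) auto
            also have "\<dots> = (\<Sum>th\<in>{1,2::nat}. \<Sum>ys\<in>{ys\<in>?J. ys j = y}. Q th ys * u'' th a)"
              by (simp add: sum_distrib_right)
            also have "\<dots> = (\<Sum>ys\<in>{ys\<in>?J. ys j = y}. \<Sum>th\<in>{1,2::nat}. Q th ys * u'' th a)"
              by (rule sum.swap)
            finally show "(\<Sum>th\<in>{1,2::nat}. Ps j th y * u'' th a) = (\<Sum>ys\<in>{ys\<in>?J. ys j = y}. \<Sum>th\<in>{1,2::nat}. Q th ys * u'' th a)" .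
          qed
          then show "Max ((\<lambda>a. \<Sum>th\<in>{1,2::nat}. Ps j th y * u'' th a) ` A'') = Max ((\<lambda>a. \<Sum>ys\<in>{ys\<in>?J. ys j = y}. \<Sum>th\<in>{1,2::nat}. Q th ys * u'' th a) ` A'')"
            by simp
        qed
        also have "\<dots> \<le> (\<Sum>y\<in>Ys j. \<Sum>ys\<in>{ys\<in>?J. ys j = y}. Max ((\<lambda>a. \<Sum>th\<in>{1,2::nat}. Q th ys * u'' th a) ` A''))"
          using A'' fib by (intro sum_mono max_le_sum_max) auto
        also have "\<dots> = (\<Sum>ys\<in>?J. Max ((\<lambda>a. \<Sum>th\<in>{1,2::nat}. Q th ys * u'' th a) ` A''))"
          unfolding joint_signals_def by (rule PiE_group[OF fI fY j, symmetric])
        also have "\<dots> = (\<Sum>n\<in>SY. Max ((\<lambda>a. \<Sum>th\<in>{1,2::nat}. S th n * u'' th a) ` A''))"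
          unfolding S_def by (rule reidx[symmetric])
        also have "\<dots> = V1 {1,2} SY S A'' u''"
          using VF(3)[of "{1,2::nat}" SY A'' S u''] A'' unfolding SY_def by auto
        finally show "V1 {1,2} (Ys j) (Ps j) A'' u'' \<le> V1 {1,2} SY S A'' u''" .
      qed
    qed
    have "more_informative {1,2} SY S RY R" using bs(3) Sexp Smi by blast
    then have "V1 {1,2} RY R {0,1::nat} u' \<le> V1 {1,2} SY S {0,1::nat} u'"
      unfolding more_informative_def by auto
    then have "V1 {1,2} RY R A u \<le> V1 {1,2} SY S A u" using relab fRY by (simp add: SY_def)
    also have "V1 {1,2} SY S A u = V1 {1,2} ?J Q A u"
    proof -
      have "V1 {1,2} SY S A u = (\<Sum>n\<in>SY. max (S 1 n * u 1 a1 + S 2 n * u 2 a1) (S 1 n * u 1 a2 + S 2 n * u 2 a2))"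
        unfolding A by (rule V1_two) (simp add: SY_def)
      also have "\<dots> = (\<Sum>ys\<in>?J. max (Q 1 ys * u 1 a1 + Q 2 ys * u 2 a1) (Q 1 ys * u 1 a2 + Q 2 ys * u 2 a2))"
        unfolding S_def by (rule reidx)
      also have "\<dots> = V1 {1,2} ?J Q A u"
        unfolding A by (rule V1_two[symmetric, OF fJ])
      finally show ?thesis .
    qed
    finally show ?thesis using VQ by simp
  qed
  have "Vm {1,2} m Ys Ps A u = M" using Vm_le Vm_ge by simp
  moreover have "V1 {1,2} RY R A u = M" using R_le R_ge by simp
  ultimately show ?thesis unfolding M_def Vj_def by simp
qed


end
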